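(* For every $n\ge2$: (a) there exists an invariant immersed framework in $\mathbb{R}^3$ whose underlying graph is the complete graph $K_{n+2}$ and whose invariance function $\gamma$ is constant; (b) there exists an invariant embedded framework in $\mathbb{R}^n$ whose underlying graph is $K_{n+2}$ and whose invariance function $\gamma$ is constant.
   Context: A framework in $\mathbb{R}^M$ is a finite simple graph $(V,E)$ together with an assignment of a point $\vec x\in\mathbb{R}^M$ to each vertex, edges being straight segments. It is immersed if distinct vertices are assigned distinct points, and embedded if it is immersed and no two edges intersect except at common endpoints. Let $P:\mathbb{R}^M\to\mathbb{C}$, $P(y_1,\dots,y_M)=y_1+iy_2$. The framework is invariant if there is a function $\gamma:V\to\mathbb{R}$ such that for every orthogonal transformation $A$ of $\mathbb{R}^M$, the function $\phi_A(x)=P(A\vec x)$ satisfies, at every vertex $x$ of degree $n(x)$, $\frac{\gamma(x)}{n(x)}\big(\sum_{y\sim x}(\phi_A(y)-\phi_A(x))\big)^2=\sum_{y\sim x}(\phi_A(x)-\phi_A(y))^2$. *)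

theory Defs
  imports Complex_Main
begin

text \<open>Points of R^M are represented as functions nat => real vanishing at every
  index >= M (coordinate y_{k+1} of the paper is the value at k).
  Linear maps of R^M are represented by matrices nat => nat => real,
  of which only entries with both indices < M matter.\<close>

definition in_space :: "nat \<Rightarrow> (nat \<Rightarrow> real) \<Rightarrow> bool" where
  "in_space M y \<longleftrightarrow> (\<forall>k\<ge>M. y k = 0)"

definition mat_apply :: "nat \<Rightarrow> (nat \<Rightarrow> nat \<Rightarrow> real) \<Rightarrow> (nat \<Rightarrow> real) \<Rightarrow> (nat \<Rightarrow> real)" where
  "mat_apply M A y = (\<lambda>i. if i < M then (\<Sum>j<M. A i j * y j) else 0)"

definition orthogonal_mat :: "nat \<Rightarrow> (nat \<Rightarrow> nat \<Rightarrow> real) \<Rightarrow> bool" where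
  "orthogonal_mat M A \<longleftrightarrow>
     (\<forall>i<M. \<forall>j<M. (\<Sum>k<M. A k i * A k j) = (if i = j then 1 else 0))"

definition Pc :: "(nat \<Rightarrow> real) \<Rightarrow> complex" where
  "Pc y = Complex (y 0) (y 1)"

definition simple_graph :: "'v set \<Rightarrow> ('v \<Rightarrow> 'v \<Rightarrow> bool) \<Rightarrow> bool" where
  "simple_graph V E \<longleftrightarrow> finite V \<and> (\<forall>u v. E u v \<longrightarrow> u \<in> V \<and> v \<in> V \<and> u \<noteq> v \<and> E v u)"

definition complete_graph :: "'v set \<Rightarrow> 'v \<Rightarrow> 'v \<Rightarrow> bool" where
  "complete_graph V u v \<longleftrightarrow> u \<in> V \<and> v \<in> V \<and> u \<noteq> v"

definition framework :: "nat \<Rightarrow> 'v set \<Rightarrow> ('v \<Rightarrow> 'v \<Rightarrow> bool) \<Rightarrow> ('v \<Rightarrow> nat \<Rightarrow> real) \<Rightarrow> bool" where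
  "framework M V E x \<longleftrightarrow> simple_graph V E \<and> (\<forall>v\<in>V. in_space M (x v))"

definition immersed_framework :: "nat \<Rightarrow> 'v set \<Rightarrow> ('v \<Rightarrow> 'v \<Rightarrow> bool) \<Rightarrow> ('v \<Rightarrow> nat \<Rightarrow> real) \<Rightarrow> bool" where
  "immersed_framework M V E x \<longleftrightarrow> framework M V E x \<and> inj_on x V"

definition seg :: "(nat \<Rightarrow> real) \<Rightarrow> (nat \<Rightarrow> real) \<Rightarrow> (nat \<Rightarrow> real) set" where
  "seg p q = {(\<lambda>i. (1 - t) * p i + t * q i) | t. 0 \<le> t \<and> t \<le> 1}"

definition embedded_framework :: "nat \<Rightarrow> 'v set \<Rightarrow> ('v \<Rightarrow> 'v \<Rightarrow> bool) \<Rightarrow> ('v \<Rightarrow> nat \<Rightarrow> real) \<Rightarrow> bool" where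
  "embedded_framework M V E x \<longleftrightarrow> immersed_framework M V E x \<and>
     (\<forall>a b c d. E a b \<and> E c d \<and> {a, b} \<noteq> {c, d} \<longrightarrow>
        seg (x a) (x b) \<inter> seg (x c) (x d) \<subseteq> x ` ({a, b} \<inter> {c, d}))"

definition invariant_with :: "nat \<Rightarrow> 'v set \<Rightarrow> ('v \<Rightarrow> 'v \<Rightarrow> bool) \<Rightarrow> ('v \<Rightarrow> nat \<Rightarrow> real) \<Rightarrow> ('v \<Rightarrow> real) \<Rightarrow> bool" where
  "invariant_with M V E x \<gamma> \<longleftrightarrow>
     (\<forall>A. orthogonal_mat M A \<longrightarrow>
       (\<forall>v\<in>V. let \<phi> = (\<lambda>w. Pc (mat_apply M A (x w))); N = {w\<in>V. E v w} in
          complex_of_real (\<gamma> v / real (card N)) * (\<Sum>w\<in>N. \<phi> w - \<phi> v)\<^sup>2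
          = (\<Sum>w\<in>N. (\<phi> v - \<phi> w)\<^sup>2)))"

definition invariant_framework :: "nat \<Rightarrow> 'v set \<Rightarrow> ('v \<Rightarrow> 'v \<Rightarrow> bool) \<Rightarrow> ('v \<Rightarrow> nat \<Rightarrow> real) \<Rightarrow> bool" where
  "invariant_framework M V E x \<longleftrightarrow> framework M V E x \<and> (\<exists>\<gamma>. invariant_with M V E x \<gamma>)"

end

theory Submission
  imports Defs "Jordan_Normal_Form.Determinant"
begin

lemma rows_orth:
  assumes "Defs.orthogonal_mat M A" "i < M" "j < M"
  shows "(\<Sum>k<M. A i k * A j k) = (if i = j then 1 else 0)"
proof -
  define B where "B = mat M M (\<lambda>(i,j). A i j)"
  have Bc: "B \<in> carrier_mat M M" "transpose_mat B \<in> carrier_mat M M" unfolding B_def by auto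
  have "transpose_mat B * B = 1\<^sub>m M"
  proof (rule eq_matI)
    fix i j assume "i < dim_row (1\<^sub>m M)" "j < dim_col (1\<^sub>m M)"
    then have ij: "i < M" "j < M" by auto
    have "(transpose_mat B * B) $$ (i,j) = (\<Sum>k<M. A k i * A k j)"
      using ij unfolding B_def by (simp add: scalar_prod_def lessThan_atLeast0 row_def col_def)
    then show "(transpose_mat B * B) $$ (i,j) = 1\<^sub>m M $$ (i,j)"
      using assms(1) ij unfolding Defs.orthogonal_mat_def by simp
  qed (auto simp: B_def)
  then have "B * transpose_mat B = 1\<^sub>m M" using mat_mult_left_right_inverse[OF Bc(2) Bc(1)] by simp
  then have "(B * transpose_mat B) $$ (i,j) = 1\<^sub>m M $$ (i,j)" by simp
  moreover have "(B * transpose_mat B) $$ (i,j) = (\<Sum>k<M. A i k * A j k)"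
    using assms unfolding B_def by (simp add: scalar_prod_def lessThan_atLeast0 row_def col_def)
  ultimately show ?thesis using assms by simp
qed



lemma sum_Complex: "(\<Sum>j\<in>S. Complex (a j) (b j)) = Complex (\<Sum>j\<in>S. a j) (\<Sum>j\<in>S. b j)"
  by (rule complex_eqI) (simp_all add: Re_sum Im_sum)

lemma inv_lemma:
  fixes x :: "nat \<Rightarrow> nat \<Rightarrow> real" and m M :: nat and \<mu> :: "nat \<Rightarrow> real" and lam :: real
  assumes M2: "2 \<le> M" and m2: "2 \<le> m"
    and s1: "\<And>j. j < M \<Longrightarrow> (\<Sum>v<m. x v j) = real m * \<mu> j"
    and s2: "\<And>j l. j < M \<Longrightarrow> l < M \<Longrightarrow>
       (\<Sum>v<m. x v j * x v l) = real m * \<mu> j * \<mu> l + (if j = l then lam else 0)"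
  shows "invariant_with M {..<m} (complete_graph {..<m}) x (\<lambda>_. (real m - 1) / real m)"
  unfolding invariant_with_def
proof (intro allI impI ballI)
  fix A v assume A: "Defs.orthogonal_mat M A" and v: "v \<in> {..<m}"
  define z where "z j = Complex (A 0 j) (A 1 j)" for j
  define \<phi> where "\<phi> w = Pc (mat_apply M A (x w))" for w
  define f0 where "f0 = (\<Sum>j<M. z j * complex_of_real (\<mu> j))"
  have phi: "\<phi> w = (\<Sum>j<M. z j * complex_of_real (x w j))" for w
  proof -
    have "\<phi> w = Complex (\<Sum>j<M. A 0 j * x w j) (\<Sum>j<M. A 1 j * x w j)"
      using M2 unfolding \<phi>_def Pc_def mat_apply_def by simp
    also have "\<dots> = (\<Sum>j<M. Complex (A 0 j * x w j) (A 1 j * x w j))" by (simp add: sum_Complex)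
    also have "\<dots> = (\<Sum>j<M. z j * complex_of_real (x w j))"
      by (rule sum.cong) (auto simp: z_def complex_eq_iff)
    finally show ?thesis .
  qed
  have zsq: "(\<Sum>j<M. z j * z j) = 0"
  proof -
    have "(\<Sum>j<M. z j * z j) = (\<Sum>j<M. Complex (A 0 j * A 0 j - A 1 j * A 1 j) (2 * (A 0 j * A 1 j)))"
      by (rule sum.cong) (auto simp: z_def complex_eq_iff)
    also have "\<dots> = Complex ((\<Sum>j<M. A 0 j * A 0 j) - (\<Sum>j<M. A 1 j * A 1 j)) (2 * (\<Sum>j<M. A 0 j * A 1 j))"
      by (simp add: sum_Complex sum_subtractf sum_distrib_left)
    also have "\<dots> = 0" using rows_orth[OF A, of 0 0] rows_orth[OF A, of 1 1] rows_orth[OF A, of 0 1] M2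
      by (simp add: complex_eq_iff)
    finally show ?thesis .
  qed
  have S1: "(\<Sum>w<m. \<phi> w) = of_nat m * f0"
  proof -
    have "(\<Sum>w<m. \<phi> w) = (\<Sum>j<M. z j * complex_of_real (\<Sum>w<m. x w j))"
      unfolding phi by (simp add: sum.swap[of _ "{..<m}"] sum_distrib_left)
    also have "\<dots> = (\<Sum>j<M. of_nat m * (z j * complex_of_real (\<mu> j)))"
      by (rule sum.cong) (auto simp: s1)
    finally show ?thesis by (simp add: f0_def sum_distrib_left)
  qed
  have S2: "(\<Sum>w<m. \<phi> w ^ 2) = of_nat m * f0 ^ 2"
  proof -
    have "(\<Sum>w<m. \<phi> w ^ 2) = (\<Sum>w<m. \<Sum>j<M. \<Sum>l<M. z j * z l * complex_of_real (x w j * x w l))"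
      unfolding phi power2_eq_square sum_product by (simp add: algebra_simps)
    also have "\<dots> = (\<Sum>j<M. \<Sum>l<M. z j * z l * complex_of_real (\<Sum>w<m. x w j * x w l))"
      by (simp add: sum.swap[of _ "{..<m}"] sum_distrib_left)
    also have "\<dots> = (\<Sum>j<M. \<Sum>l<M. of_nat m * ((z j * complex_of_real (\<mu> j)) * (z l * complex_of_real (\<mu> l)))
                      + (if j = l then complex_of_real lam * (z j * z j) else 0))"
      by (intro sum.cong refl) (auto simp: s2 algebra_simps)
    also have "\<dots> = of_nat m * f0 ^ 2 + complex_of_real lam * (\<Sum>j<M. z j * z j)"
      by (simp add: sum.distrib f0_def power2_eq_square sum_product sum_distrib_left algebra_simps)
    finally show ?thesis using zsq by simp
  qed
  have N: "{w \<in> {..<m}. complete_graph {..<m} v w} = {..<m} - {v}"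
    using v by (auto simp: complete_graph_def)
  have cardN: "card ({..<m} - {v}) = m - 1" using v by simp
  have L: "(\<Sum>w\<in>{..<m} - {v}. \<phi> w - \<phi> v) = of_nat m * (f0 - \<phi> v)"
  proof -
    have "(\<Sum>w\<in>{..<m} - {v}. \<phi> w - \<phi> v) = (\<Sum>w<m. \<phi> w - \<phi> v)"
      using v by (simp add: sum_diff1)
    then show ?thesis using S1 by (simp add: sum_subtractf algebra_simps)
  qed
  have R: "(\<Sum>w\<in>{..<m} - {v}. (\<phi> v - \<phi> w)^2) = of_nat m * (f0 - \<phi> v)^2"
  proof -
    have "(\<Sum>w\<in>{..<m} - {v}. (\<phi> v - \<phi> w)^2) = (\<Sum>w<m. (\<phi> v - \<phi> w)^2)"
      using v by (simp add: sum_diff1)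
    also have "\<dots> = (\<Sum>w<m. \<phi> v ^ 2 - 2 * \<phi> v * \<phi> w + \<phi> w ^ 2)"
      by (simp add: power2_eq_square algebra_simps)
    also have "\<dots> = of_nat m * \<phi> v ^ 2 - 2 * \<phi> v * (\<Sum>w<m. \<phi> w) + (\<Sum>w<m. \<phi> w ^ 2)"
      by (simp add: sum.distrib sum_subtractf sum_distrib_left)
    finally show ?thesis using S1 S2 by (simp add: power2_eq_square algebra_simps)
  qed
  have m1: "real (m - 1) = real m - 1" using m2 by simp
  have mpos: "real m \<noteq> 0" using m2 by simp
  have coef: "complex_of_real ((real m - 1) / real m / real (m - 1)) = 1 / of_nat m"
    using m2 m1 by (simp add: field_simps)
  show "let \<phi>' = \<lambda>w. Pc (mat_apply M A (x w)); N = {w \<in> {..<m}. complete_graph {..<m} v w}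
        in complex_of_real ((real m - 1) / real m / real (card N)) * (\<Sum>w\<in>N. \<phi>' w - \<phi>' v)\<^sup>2 =
           (\<Sum>w\<in>N. (\<phi>' v - \<phi>' w)\<^sup>2)"
    unfolding Let_def N cardN \<phi>_def[symmetric] L R coef
    using mpos by (simp add: power2_eq_square field_simps)
qed



definition X :: "nat \<Rightarrow> real \<Rightarrow> (nat \<Rightarrow> real) \<Rightarrow> nat \<Rightarrow> nat \<Rightarrow> real" where
  "X M a s v = (\<lambda>i. if i < M then (if v < M then (if i = v then a else 0) else s (v - M)) else 0)"

lemma sum_split_add: fixes r :: nat shows "(\<Sum>i<M+r. f i) = (\<Sum>i<M. f i) + (\<Sum>i<r. f (M+i))"
  by (induction r) (auto simp: add.assoc)

lemma conf_inv:
  assumes M2: "2 \<le> M" and eq: "real (M+r) * (\<Sum>j<r. s j ^ 2) = (a + (\<Sum>j<r. s j))^2"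
  shows "invariant_with M {..<M+r} (complete_graph {..<M+r}) (X M a s) (\<lambda>_. (real (M+r) - 1) / real (M+r))"
proof (rule inv_lemma[where \<mu> = "\<lambda>j. (a + (\<Sum>j<r. s j)) / real (M+r)" and lam = "a^2"])
  show "2 \<le> M" by fact
  show "2 \<le> M + r" using M2 by simp
  have mpos: "real (M+r) > 0" using M2 by simp
  fix j l assume j: "j < M"
  have A: "(\<Sum>v<M. (if j = v then a else 0)) = a" using j by (simp add: sum.delta)
  show "(\<Sum>v<M+r. X M a s v j) = real (M+r) * ((a + (\<Sum>j<r. s j)) / real (M+r))"
    unfolding sum_split_add using j mpos A by (simp add: X_def)
  assume l: "l < M"
  have B: "(\<Sum>v<M. (if j = v then a else 0) * (if l = v then a else 0)) = (if j = l then a^2 else 0)"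
  proof -
    have "(\<Sum>v<M. (if j = v then a else 0) * (if l = v then a else 0)) = (\<Sum>v<M. if v = j then (if l = j then a^2 else 0) else 0)"
      by (rule sum.cong) (auto simp: power2_eq_square)
    also have "\<dots> = (if j = l then a^2 else 0)" using j by (simp add: sum.delta')
    finally show ?thesis .
  qed
  have "(\<Sum>v<M+r. X M a s v j * X M a s v l) = (if j = l then a^2 else 0) + (\<Sum>i<r. s i ^ 2)"
    unfolding sum_split_add using j l B by (simp add: X_def power2_eq_square)
  also have "(\<Sum>i<r. s i ^ 2) = real (M + r) * ((a + (\<Sum>j<r. s j)) / real (M + r)) * ((a + (\<Sum>j<r. s j)) / real (M + r))"
  proof -
    define T where "T = a + (\<Sum>j<r. s j)"
    have "real (M+r) * (T / real (M+r)) * (T / real (M+r)) = T^2 / real (M+r)"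
      using mpos by (simp add: power2_eq_square)
    also have "\<dots> = (\<Sum>i<r. s i ^ 2)" using eq mpos unfolding T_def
      by (simp add: divide_eq_eq mult.commute)
    finally show ?thesis unfolding T_def by simp
  qed
  finally show "(\<Sum>v<M+r. X M a s v j * X M a s v l) = real (M + r) * ((a + (\<Sum>j<r. s j)) / real (M + r)) * ((a + (\<Sum>j<r. s j)) / real (M + r)) + (if j = l then a^2 else 0)"
    by simp
qed



definition beta :: "nat \<Rightarrow> nat \<Rightarrow> nat \<Rightarrow> real" where
  "beta n v k = (if v \<le> n then (if k = v then 1 else 0) else 1 / (real n + 1))"

lemma exists_other: "2 \<le> n \<Longrightarrow> \<exists>k\<le>n. k \<noteq> a \<and> k \<noteq> (b::nat)"
  by (metis One_nat_def Suc_1 le_0_eq le_trans nat_le_linear not_less_eq_eq numeral_le_one_iff semiring_norm(69))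

lemma beta_nonneg: "beta n v k \<ge> 0" by (simp add: beta_def)

lemma beta_small: "k \<noteq> v \<Longrightarrow> beta n v k \<le> 1 / (real n + 1)"
  by (simp add: beta_def)

lemma claimA:
  assumes n: "2 \<le> n" and a: "a \<le> n+1" and c: "c \<le> n+1" and d: "d \<le> n+1" and cd: "c \<noteq> d"
    and s: "0 \<le> \<sigma>" "\<sigma> \<le> 1"
    and W: "\<And>k. k \<le> n \<Longrightarrow> beta n a k = (1-\<sigma>) * beta n c k + \<sigma> * beta n d k"
  shows "a = c \<or> a = d"
proof (rule ccontr)
  assume na: "\<not> (a = c \<or> a = d)"
  show False
  proof (cases "a \<le> n")
    case True
    have "beta n a a = 1" using True by (simp add: beta_def)
    moreover have "beta n c a \<le> 1 / (real n + 1)" "beta n d a \<le> 1 / (real n + 1)"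
      using na beta_small by metis+
    moreover have "1 / (real n + 1) < 1" using n by (simp add: field_simps)
    moreover have "(1-\<sigma>) * beta n c a \<le> (1-\<sigma>) * (1 / (real n + 1))"
      by (rule mult_left_mono) (use na beta_small s in auto)
    moreover have "\<sigma> * beta n d a \<le> \<sigma> * (1 / (real n + 1))"
      by (rule mult_left_mono) (use na beta_small s in auto)
    moreover have "(1-\<sigma>) * (1 / (real n + 1)) + \<sigma> * (1 / (real n + 1)) = 1 / (real n + 1)"
      by (simp add: field_simps)
    ultimately show False using W[OF True] by linarith
  next
    case False
    then have an: "a = n+1" using a by simp
    then have "c \<le> n" "d \<le> n" using na c d by auto
    obtain k where k: "k \<le> n" "k \<noteq> c" "k \<noteq> d" using exists_other[OF n] by blast
    have "beta n a k = 1/(real n + 1)" using an by (simp add: beta_def)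
    moreover have "beta n c k = 0" "beta n d k = 0" using k \<open>c \<le> n\<close> \<open>d \<le> n\<close> by (auto simp: beta_def)
    ultimately show False using W[OF k(1)] by simp
  qed
qed

lemma claimB1:
  assumes n: "2 \<le> n" and a: "a \<le> n" and b: "b \<le> n" and c: "c \<le> n+1" and d: "d \<le> n+1"
    and ab: "a \<noteq> b" and cd: "c \<noteq> d" and ne: "{a,b} \<noteq> {c,d}"
    and t: "0 < \<tau>" "\<tau> < 1" and s: "0 \<le> \<sigma>" "\<sigma> \<le> 1"
    and W: "\<And>k. k \<le> n \<Longrightarrow> (1-\<tau>) * beta n a k + \<tau> * beta n b k = (1-\<sigma>) * beta n c k + \<sigma> * beta n d k"
  shows False
proof -
  obtain k where k: "k \<le> n" "k \<noteq> a" "k \<noteq> b" using exists_other[OF n] by blast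
  have Wk: "(1-\<sigma>) * beta n c k + \<sigma> * beta n d k = 0"
    using W[OF k(1)] k a b by (simp add: beta_def)
  have Wa: "(1-\<sigma>) * beta n c a + \<sigma> * beta n d a = 1 - \<tau>"
    using W[OF a] a b ab by (simp add: beta_def)
  have Wb: "(1-\<sigma>) * beta n c b + \<sigma> * beta n d b = \<tau>"
    using W[OF b] a b ab by (simp add: beta_def)
  show False
  proof (cases "c \<le> n")
    case cn: True
    show False
    proof (cases "d \<le> n")
      case dn: True
      have "a = c \<or> a = d" using Wa t cn dn by (auto simp: beta_def split: if_splits)
      moreover have "b = c \<or> b = d" using Wb t cn dn by (auto simp: beta_def split: if_splits)
      ultimately show False using ab cd ne by auto
    next
      case False
      then have "d = n+1" using d by simp
      have "(1-\<sigma>) * beta n c k \<ge> 0" using beta_nonneg[of n c k] s by simp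
      moreover have "\<sigma> * beta n d k = \<sigma> / (real n + 1)" using \<open>d = n+1\<close> by (simp add: beta_def)
      moreover have "\<sigma> / (real n + 1) \<ge> 0" using s by simp
      ultimately have "\<sigma> / (real n + 1) = 0" using Wk by linarith
      then have "\<sigma> = 0" by simp
      then show False using Wa Wb t cn ab by (auto simp: beta_def split: if_splits)
    qed
  next
    case False
    then have cn: "c = n+1" using c by simp
    then have dn: "d \<le> n" using cd d by auto
    have "\<sigma> * beta n d k \<ge> 0" using beta_nonneg[of n d k] s by simp
    moreover have "(1-\<sigma>) * beta n c k = (1-\<sigma>) / (real n + 1)" using cn by (simp add: beta_def)
    moreover have "(1-\<sigma>) / (real n + 1) \<ge> 0" using s by simp
    ultimately have "(1-\<sigma>) / (real n + 1) = 0" using Wk by linarith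
    then have "\<sigma> = 1" by simp
    then show False using Wa Wb t dn ab by (auto simp: beta_def split: if_splits)
  qed
qed

lemma claimB2:
  assumes n: "2 \<le> n" and a: "a = n+1" and b: "b \<le> n" and c: "c \<le> n+1" and d: "d \<le> n+1"
    and cd: "c \<noteq> d" and ne: "{a,b} \<noteq> {c,d}"
    and t: "0 < \<tau>" "\<tau> < 1" and s: "0 \<le> \<sigma>" "\<sigma> \<le> 1"
    and W: "\<And>k. k \<le> n \<Longrightarrow> (1-\<tau>) * beta n a k + \<tau> * beta n b k = (1-\<sigma>) * beta n c k + \<sigma> * beta n d k"
  shows False
proof -
  have np: "real n + 1 > 0" by simp
  have pos: "(1-\<tau>) * beta n a k + \<tau> * beta n b k > 0" for k
  proof -
    have "(1-\<tau>) * beta n a k > 0" using a t np by (simp add: beta_def)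
    moreover have "\<tau> * beta n b k \<ge> 0" using t beta_nonneg[of n b k] by simp
    ultimately show ?thesis by linarith
  qed
  show False
  proof (cases "c \<le> n \<and> d \<le> n")
    case True
    obtain k where k: "k \<le> n" "k \<noteq> c" "k \<noteq> d" using exists_other[OF n] by blast
    show False using W[OF k(1)] pos[of k] k True by (simp add: beta_def)
  next
    case False
    then have "c = n+1 \<or> d = n+1" using c d by auto
    then show False
    proof
      assume cn: "c = n+1"
      then have dn: "d \<le> n" "d \<noteq> b" using cd d ne a by auto
      obtain k where k: "k \<le> n" "k \<noteq> b" "k \<noteq> d" using exists_other[OF n] by blast
      have "(1-\<tau>) / (real n + 1) = (1-\<sigma>) / (real n + 1)" using W[OF k(1)] k a b cn dn by (simp add: beta_def)
      then have "\<tau> = \<sigma>" using np by (simp add: divide_right_mono field_simps)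
      moreover have "(1-\<tau>) / (real n + 1) + \<tau> = (1-\<sigma>) / (real n + 1)" using W[OF b] a b cn dn by (simp add: beta_def)
      ultimately show False using t by simp
    next
      assume dn': "d = n+1"
      then have dn: "c \<le> n" "c \<noteq> b" using cd c ne a by auto
      obtain k where k: "k \<le> n" "k \<noteq> b" "k \<noteq> c" using exists_other[OF n] by blast
      have "(1-\<tau>) / (real n + 1) = \<sigma> / (real n + 1)" using W[OF k(1)] k a b dn' dn by (simp add: beta_def)
      moreover have "(1-\<tau>) / (real n + 1) + \<tau> = \<sigma> / (real n + 1)" using W[OF b] a b dn' dn by (simp add: beta_def)
      ultimately show False using t by simp
    qed
  qed
qed

lemma claim:
  assumes n: "2 \<le> n" and a: "a \<le> n+1" and b: "b \<le> n+1" and c: "c \<le> n+1" and d: "d \<le> n+1"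
    and ab: "a \<noteq> b" and cd: "c \<noteq> d" and ne: "{a,b} \<noteq> {c,d}"
    and t: "0 \<le> \<tau>" "\<tau> \<le> 1" and s: "0 \<le> \<sigma>" "\<sigma> \<le> 1"
    and W: "\<And>k. k \<le> n \<Longrightarrow> (1-\<tau>) * beta n a k + \<tau> * beta n b k = (1-\<sigma>) * beta n c k + \<sigma> * beta n d k"
  shows "(\<tau> = 0 \<and> (a = c \<or> a = d)) \<or> (\<tau> = 1 \<and> (b = c \<or> b = d))"
proof (cases "\<tau> = 0")
  case True
  then show ?thesis using claimA[OF n a c d cd s] W by simp
next
  case t0: False
  show ?thesis
  proof (cases "\<tau> = 1")
    case True
    then show ?thesis using claimA[OF n b c d cd s] W by simp
  next
    case False
    then have t': "0 < \<tau>" "\<tau> < 1" using t t0 by auto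
    have False
    proof (cases "a \<le> n \<and> b \<le> n")
      case True
      then show False using claimB1[OF n _ _ c d ab cd ne t' s W] by blast
    next
      case False
      then have "a = n+1 \<or> b = n+1" using a b by auto
      then show False
      proof
        assume "a = n+1"
        then have "b \<le> n" using ab b by auto
        then show False using claimB2[OF n \<open>a = n+1\<close> _ c d cd ne t' s W] by blast
      next
        assume bn: "b = n+1"
        then have an: "a \<le> n" using ab a by auto
        have ne': "{b,a} \<noteq> {c,d}" using ne by (simp add: insert_commute)
        have t'': "0 < 1 - \<tau>" "1 - \<tau> < 1" using t' by auto
        have W': "(1-(1-\<tau>)) * beta n b k + (1-\<tau>) * beta n a k = (1-\<sigma>) * beta n c k + \<sigma> * beta n d k" if "k \<le> n" for k
          using W[OF that] by simp
        show False using claimB2[OF n bn an c d cd ne' t'' s W'] by blast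
      qed
    qed
    then show ?thesis ..
  qed
qed



definition mu :: "nat \<Rightarrow> real \<Rightarrow> (nat \<Rightarrow> real) \<Rightarrow> real" where
  "mu n t y = ((\<Sum>j<n. y j) - 1) / (real n * t - 1)"

definition bcf :: "nat \<Rightarrow> real \<Rightarrow> (nat \<Rightarrow> real) \<Rightarrow> nat \<Rightarrow> real" where
  "bcf n t y k = (if k = n then mu n t y else y k - t * mu n t y)"

lemma complete_simple: "simple_graph {..<m::nat} (complete_graph {..<m})"
  by (auto simp: simple_graph_def complete_graph_def)

lemma X_space: "in_space M (X M a s v)"
  by (simp add: in_space_def X_def)

lemma bcf_lin:
  assumes "real n * t - 1 \<noteq> 0"
  shows "bcf n t (\<lambda>i. (1-\<tau>) * p i + \<tau> * q i) k = (1-\<tau>) * bcf n t p k + \<tau> * bcf n t q k"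
proof -
  have M: "mu n t (\<lambda>i. (1-\<tau>) * p i + \<tau> * q i) = (1-\<tau>) * mu n t p + \<tau> * mu n t q"
  proof -
    have S: "(\<Sum>j<n. (1-\<tau>) * p j + \<tau> * q j) = (1-\<tau>) * (\<Sum>j<n. p j) + \<tau> * (\<Sum>j<n. q j)"
      by (simp add: sum.distrib sum_distrib_left)
    have "(1-\<tau>) * (\<Sum>j<n. p j) + \<tau> * (\<Sum>j<n. q j) - 1 = (1-\<tau>) * ((\<Sum>j<n. p j) - 1) + \<tau> * ((\<Sum>j<n. q j) - 1)"
      by (simp add: algebra_simps)
    then show ?thesis unfolding mu_def S by (simp add: add_divide_distrib)
  qed
  then show ?thesis unfolding bcf_def M by (simp add: algebra_simps)
qed

lemma bcf_X:
  assumes n: "2 \<le> n" and tneg: "t < 0" and tc: "(real n + 1) * c = 1 + t"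
    and v: "v \<le> n+1" and k: "k \<le> n"
  shows "bcf n t (X n 1 (\<lambda>j. if j = 0 then t else c) v) k = beta n v k"
proof -
  let ?s = "\<lambda>j::nat. if j = 0 then t else c"
  have "real n * t \<le> 0" using tneg by (intro mult_nonneg_nonpos) auto
  then have D: "real n * t - 1 \<noteq> 0" "real n * t - 1 < 0" by auto
  have np: "real n + 1 > 0" by simp
  show ?thesis
  proof (cases "v < n")
    case True
    have S: "(\<Sum>j<n. X n 1 ?s v j) = 1" using True by (simp add: X_def sum.delta')
    show ?thesis using True S k unfolding bcf_def mu_def beta_def by (auto simp: X_def)
  next
    case False
    then have "v = n \<or> v = n+1" using v by auto
    then show ?thesis
    proof
      assume vn: "v = n"
      have S: "(\<Sum>j<n. X n 1 ?s v j) = real n * t" using vn by (simp add: X_def)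
      have m: "mu n t (X n 1 ?s v) = 1" using S D unfolding mu_def by simp
      show ?thesis using vn k m unfolding bcf_def beta_def by (auto simp: X_def)
    next
      assume vn: "v = n+1"
      have S: "(\<Sum>j<n. X n 1 ?s v j) = real n * c" using vn by (simp add: X_def)
      have m: "mu n t (X n 1 ?s v) = 1 / (real n + 1)"
      proof -
        have "(real n*c - 1)*(real n+1) = real n * ((real n + 1) * c) - real n - 1" by (simp add: algebra_simps)
        also have "\<dots> = real n * t - 1" using tc by (simp add: algebra_simps)
        finally have e: "(real n*c - 1)*(real n+1) = real n * t - 1" .
        show ?thesis unfolding mu_def S using e D np by (simp add: field_simps)
      qed
      have "c - t / (real n + 1) = 1 / (real n + 1)" using tc np by (simp add: field_simps)
      then show ?thesis using vn k m unfolding bcf_def beta_def by (auto simp: X_def)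
    qed
  qed
qed

lemma beta_inj:
  assumes n: "2 \<le> n" and u: "u \<le> n+1" and v: "v \<le> n+1"
    and e: "\<And>k. k \<le> n \<Longrightarrow> beta n u k = beta n v k"
  shows "u = v"
proof (rule ccontr)
  assume uv: "u \<noteq> v"
  have np: "1 / (real n + 1) \<noteq> 1" using n by simp
  show False
  proof (cases "u \<le> n")
    case True
    then show False using e[OF True] uv np by (auto simp: beta_def split: if_splits)
  next
    case False
    then have "v \<le> n" using u v uv by auto
    then show False using e[OF \<open>v \<le> n\<close>] uv np False by (auto simp: beta_def split: if_splits)
  qed
qed

lemma seg_D: "y \<in> seg p q \<Longrightarrow> \<exists>\<tau>. 0 \<le> \<tau> \<and> \<tau> \<le> 1 \<and> y = (\<lambda>i. (1-\<tau>) * p i + \<tau> * q i)"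
  unfolding seg_def by blast

lemma embed:
  assumes n: "2 \<le> n" and tneg: "t < 0" and tc: "(real n + 1) * c = 1 + t"
  shows "embedded_framework n {..<n+2} (complete_graph {..<n+2}) (X n 1 (\<lambda>j. if j = 0 then t else c))"
proof -
  let ?s = "\<lambda>j::nat. if j = 0 then t else c"
  let ?P = "X n 1 ?s"
  have "real n * t \<le> 0" using tneg by (intro mult_nonneg_nonpos) auto
  then have D: "real n * t - 1 \<noteq> 0" by auto
  have bc: "bcf n t (?P v) k = beta n v k" if "v \<le> n+1" "k \<le> n" for v k
    using bcf_X[OF n tneg tc that] .
  have inj: "inj_on ?P {..<n+2}"
  proof (rule inj_onI)
    fix u v assume u: "u \<in> {..<n+2}" and v: "v \<in> {..<n+2}" and e: "?P u = ?P v"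
    show "u = v"
    proof (rule beta_inj[OF n])
      show "u \<le> n+1" "v \<le> n+1" using u v by auto
      fix k assume k: "k \<le> n"
      have "beta n u k = bcf n t (?P u) k" using bc[OF _ k, of u] u by simp
      also have "\<dots> = bcf n t (?P v) k" using e by simp
      also have "\<dots> = beta n v k" using bc[OF _ k, of v] v by simp
      finally show "beta n u k = beta n v k" .
    qed
  qed
  have emb: "seg (?P a) (?P b) \<inter> seg (?P c') (?P d) \<subseteq> ?P ` ({a, b} \<inter> {c', d})"
    if E: "complete_graph {..<n+2} a b" "complete_graph {..<n+2} c' d" and ne: "{a,b} \<noteq> {c',d}" for a b c' d
  proof
    fix y assume y: "y \<in> seg (?P a) (?P b) \<inter> seg (?P c') (?P d)"
    obtain \<tau> where t: "0 \<le> \<tau>" "\<tau> \<le> 1" and y1: "y = (\<lambda>i. (1-\<tau>) * ?P a i + \<tau> * ?P b i)"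
      using seg_D y by blast
    obtain \<sigma> where s: "0 \<le> \<sigma>" "\<sigma> \<le> 1" and y2: "y = (\<lambda>i. (1-\<sigma>) * ?P c' i + \<sigma> * ?P d i)"
      using seg_D y by blast
    have abcd: "a \<le> n+1" "b \<le> n+1" "c' \<le> n+1" "d \<le> n+1" "a \<noteq> b" "c' \<noteq> d"
      using E by (auto simp: complete_graph_def)
    have W: "(1-\<tau>) * beta n a k + \<tau> * beta n b k = (1-\<sigma>) * beta n c' k + \<sigma> * beta n d k" if k: "k \<le> n" for k
    proof -
      have "bcf n t y k = (1-\<tau>) * beta n a k + \<tau> * beta n b k"
        unfolding y1 bcf_lin[OF D] using bc abcd k by simp
      moreover have "bcf n t y k = (1-\<sigma>) * beta n c' k + \<sigma> * beta n d k"
        unfolding y2 bcf_lin[OF D] using bc abcd k by simp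
      ultimately show ?thesis by simp
    qed
    from claim[OF n abcd ne t s W]
    have "(\<tau> = 0 \<and> (a = c' \<or> a = d)) \<or> (\<tau> = 1 \<and> (b = c' \<or> b = d))" .
    then show "y \<in> ?P ` ({a, b} \<inter> {c', d})"
    proof
      assume h: "\<tau> = 0 \<and> (a = c' \<or> a = d)"
      then have "y = ?P a" using y1 by simp
      then show ?thesis using h by blast
    next
      assume h: "\<tau> = 1 \<and> (b = c' \<or> b = d)"
      then have "y = ?P b" using y1 by simp
      then show ?thesis using h by blast
    qed
  qed
  show ?thesis
    unfolding embedded_framework_def immersed_framework_def framework_def
    using complete_simple X_space inj emb by blast
qed



lemma partb:
  assumes n: "2 \<le> n"
  shows "\<exists>(x :: nat \<Rightarrow> nat \<Rightarrow> real) (c :: real).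
            embedded_framework n {..<n+2} (complete_graph {..<n+2}) x \<and>
            invariant_with n {..<n+2} (complete_graph {..<n+2}) x (\<lambda>_. c)"
proof -
  define q where "q = sqrt (real n + 1)"
  have q2: "q^2 = real n + 1" unfolding q_def by simp
  have qpos: "q > 0" unfolding q_def by simp
  define t where "t = - 1 / (q + 1)"
  define c where "c = 1 / (q * (q + 1))"
  have tneg: "t < 0" unfolding t_def using qpos by simp
  have tc: "(real n + 1) * c = 1 + t"
  proof -
    have "(real n + 1) * c = q * q / (q * (q+1))" unfolding c_def q2[symmetric] by (simp add: power2_eq_square)
    also have "\<dots> = q / (q+1)" using qpos by simp
    also have "\<dots> = 1 + t" unfolding t_def using qpos by (simp add: field_simps)
    finally show ?thesis .
  qed
  have eq: "real (n + 2) * (\<Sum>j<2. (if (j::nat) = 0 then t else c) ^ 2) = (1 + (\<Sum>j<2. if (j::nat) = 0 then t else c))^2"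
  proof -
    have A: "(\<Sum>j<2. (if (j::nat) = 0 then t else c) ^ 2) = t^2 + c^2" by (simp add: numeral_2_eq_2)
    have B: "(\<Sum>j<2. if (j::nat) = 0 then t else c) = t + c" by (simp add: numeral_2_eq_2)
    have q1: "q + 1 \<noteq> 0" "q \<noteq> 0" using qpos by auto
    have C: "t^2 + c^2 = (q^2+1) / (q^2 * (q+1)^2)"
    proof -
      have "t^2 = 1/(q+1)^2" by (simp add: t_def power_divide)
      moreover have "c^2 = 1/(q^2 * (q+1)^2)" by (simp add: c_def power_divide power_mult_distrib)
      moreover have "1/(q+1)^2 + 1/(q^2 * (q+1)^2) = (q^2+1) / (q^2 * (q+1)^2)"
        using q1 by (simp add: add_divide_distrib[symmetric] divide_simps)
      ultimately show ?thesis by simp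
    qed
    have D: "1 + t + c = (q^2+1) / (q * (q+1))" unfolding t_def c_def using q1
      by (simp add: divide_simps) (simp add: algebra_simps power2_eq_square)
    have E: "real (n+2) = q^2 + 1" using q2 by simp
    show ?thesis unfolding A B E C using D qpos
      by (simp add: add.assoc[symmetric] power_divide power_mult_distrib power2_eq_square)
  qed
  show ?thesis
    using embed[OF n tneg tc] conf_inv[OF n eq] by blast
qed

lemma parta:
  assumes n: "2 \<le> n"
  shows "\<exists>(x :: nat \<Rightarrow> nat \<Rightarrow> real) (c :: real).
            immersed_framework 3 {..<n+2} (complete_graph {..<n+2}) x \<and>
            invariant_with 3 {..<n+2} (complete_graph {..<n+2}) x (\<lambda>_. c)"
proof -
  define r where "r = n - 1"
  have nr: "n + 2 = 3 + r" "r \<ge> 1" unfolding r_def using n by auto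
  define s where "s j = real j + 1" for j
  define R2 where "R2 = (\<Sum>j<r. s j ^ 2)"
  define S where "S = (\<Sum>j<r. s j)"
  define a where "a = - sqrt (real (3 + r) * R2) - S"
  have R2pos: "R2 > 0"
  proof -
    have "R2 \<ge> s 0 ^ 2" unfolding R2_def using nr(2)
      by (intro member_le_sum) auto
    then show ?thesis by (simp add: s_def)
  qed
  have S0: "S \<ge> 0" unfolding S_def s_def by (intro sum_nonneg) auto
  have apos: "a < 0" proof -
    have "sqrt (real (3 + r) * R2) > 0" using R2pos by simp
    then show ?thesis unfolding a_def using S0 by linarith
  qed
  have eq: "real (3 + r) * (\<Sum>j<r. s j ^ 2) = (a + (\<Sum>j<r. s j))^2"
    unfolding R2_def[symmetric] S_def[symmetric] a_def using R2pos
    by (simp add: power2_eq_square[symmetric])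
  have inv: "invariant_with 3 {..<3+r} (complete_graph {..<3+r}) (X 3 a s) (\<lambda>_. (real (3+r) - 1) / real (3+r))"
    using conf_inv[of 3 r s a] eq by simp
  have inj: "inj_on (X 3 a s) {..<3+r}"
  proof (rule inj_onI)
    fix u v assume u: "u \<in> {..<3+r}" and v: "v \<in> {..<3+r}" and e: "X 3 a s u = X 3 a s v"
    have e': "X 3 a s u i = X 3 a s v i" for i using e by simp
    show "u = v"
    proof (rule ccontr)
      assume uv: "u \<noteq> v"
      show False
      proof (cases "u < 3")
        case True
        show False
        proof (cases "v < 3")
          case True
          then show False using e'[of u] \<open>u < 3\<close> uv apos by (simp add: X_def)
        next
          case False
          define i where "i = (if u = 0 then 1 else (0::nat))"
          have "i < 3" "i \<noteq> u" unfolding i_def by auto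
          then show False using e'[of i] \<open>u < 3\<close> False by (simp add: X_def s_def)
        qed
      next
        case False
        show False
        proof (cases "v < 3")
          case True
          define i where "i = (if v = 0 then 1 else (0::nat))"
          have "i < 3" "i \<noteq> v" unfolding i_def by auto
          then show False using e'[of i] \<open>v < 3\<close> False by (simp add: X_def s_def)
        next
          case vF: False
          then show False using e'[of 0] False uv by (simp add: X_def s_def)
        qed
      qed
    qed
  qed
  have "immersed_framework 3 {..<3+r} (complete_graph {..<3+r}) (X 3 a s)"
    unfolding immersed_framework_def framework_def using complete_simple X_space inj by blast
  then show ?thesis using inv unfolding nr(1) by blast
qed

theorem corollary5p4:
  fixes n :: nat
  assumes "n \<ge> 2"
  shows "(\<exists>(x :: nat \<Rightarrow> nat \<Rightarrow> real) (c :: real).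
            immersed_framework 3 {..<n+2} (complete_graph {..<n+2}) x \<and>
            invariant_with 3 {..<n+2} (complete_graph {..<n+2}) x (\<lambda>_. c))
       \<and> (\<exists>(x :: nat \<Rightarrow> nat \<Rightarrow> real) (c :: real).
            embedded_framework n {..<n+2} (complete_graph {..<n+2}) x \<and>
            invariant_with n {..<n+2} (complete_graph {..<n+2}) x (\<lambda>_. c))"
  using parta[OF assms] partb[OF assms] by blast

end
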